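(* If the Markov monoid of a probabilistic automaton $\mathcal{A}$ contains a non-simplicity witness, then $\mathcal{A}$ is not simple.
   Context: Fix a finite alphabet $A$ and a probabilistic automaton $\mathcal{A}=(Q,q_0,\Delta,F)$, $\Delta:Q\times A\to\mathcal{D}(Q)$. For $a\in A$ let $M_a(s,t)=\Delta(s,a)(t)$, for $u=a_0\cdots a_{n-1}$ let $M_u=M_{a_0}\cdots M_{a_{n-1}}$ (identity for the empty word), $\mathbb{P}_{\mathcal{A}}(s\xrightarrow{u}t)=M_u(s,t)$ and $\mathbb{P}_{\mathcal{A}}(s\xrightarrow{u}T)=\sum_{t\in T}\mathbb{P}_{\mathcal{A}}(s\xrightarrow{u}t)$. For $w\in A^\omega$, $w_{<k}$ is its prefix of length $k$. The process induced by $w\in A^\omega$ from $p\in Q$ is simple if there exist $\lambda>0$ and sequences $(A_k),(B_k)$ of subsets of $Q$ with $A_k\cap B_k=\emptyset$, $A_k\cup B_k=Q$ for all $k$, $\mathbb{P}_{\mathcal{A}}(p\xrightarrow{w_{<k}}q)\ge\lambda$ for all $k$ and $q\in A_k$, and $\lim_n\mathbb{P}_{\mathcal{A}}(p\xrightarrow{w_{<n}}B_n)=0$; $\mathcal{A}$ is simple if every such process (all $w$, all $p$) is simple. A limit-word is a map $\mathbf{u}:Q\times Q\to\{0,1\}$ such that every $s$ has some $t$ with $\mathbf{u}(s,t)=1$. Concatenation: $(\mathbf{u}\cdot\mathbf{v})(s,t)=1$ iff there is $q$ with $\mathbf{u}(s,q)=\mathbf{v}(q,t)=1$ (written $\mathbf{u}\mathbf{v}$).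 $\mathbf{u}$ is idempotent if $\mathbf{u}\mathbf{u}=\mathbf{u}$; for idempotent $\mathbf{u}$, $s$ is $\mathbf{u}$-recurrent if for all $t$, $\mathbf{u}(s,t)=1\Rightarrow\mathbf{u}(t,s)=1$, and $\mathbf{u}$-transient otherwise; $\mathbf{u}^\sharp(s,t)=1$ iff $\mathbf{u}(s,t)=1$ and $t$ is $\mathbf{u}$-recurrent. For $a\in A$, $\mathbf{a}(s,t)=1$ iff $\Delta(s,a)(t)>0$; $\mathbf{1}$ is the identity. The Markov monoid of $\mathcal{A}$ is the smallest set of limit-words containing $\{\mathbf{a}\mid a\in A\}\cup\{\mathbf{1}\}$ and closed under concatenation and iteration of idempotents. A non-simplicity witness is a triple $(\mathbf{u},\mathbf{v},\mathbf{w})$ of elements of the Markov monoid, with $\mathbf{v}$ idempotent, for which there exist states $r,t$ such that: $\mathbf{u}\mathbf{v}^\sharp\mathbf{w}$ is idempotent, $r$ is $\mathbf{u}\mathbf{v}^\sharp\mathbf{w}$-recurrent, $(\mathbf{u}\mathbf{v})(r,t)=1$, and $t$ is $\mathbf{v}$-transient. *)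

theory Defs
  imports Complex_Main
begin

text \<open>A probabilistic automaton over a finite alphabet 'a with finite state set 'q is
  given by its transition function Delta s a t = probability to go from s to t reading a.
  The initial state and final states play no role for simplicity.\<close>

definition stochastic :: "('q::finite \<Rightarrow> 'a::finite \<Rightarrow> 'q \<Rightarrow> real) \<Rightarrow> bool" where
  "stochastic Delta \<longleftrightarrow> (\<forall>s a t. Delta s a t \<ge> 0) \<and> (\<forall>s a. (\<Sum>t\<in>UNIV. Delta s a t) = 1)"

fun prob :: "('q::finite \<Rightarrow> 'a \<Rightarrow> 'q \<Rightarrow> real) \<Rightarrow> 'q \<Rightarrow> 'a list \<Rightarrow> 'q \<Rightarrow> real" where
  "prob Delta s [] t = (if s = t then 1 else 0)"
| "prob Delta s (a # u) t = (\<Sum>q\<in>UNIV. Delta s a q * prob Delta q u t)"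

definition prob_set :: "('q::finite \<Rightarrow> 'a \<Rightarrow> 'q \<Rightarrow> real) \<Rightarrow> 'q \<Rightarrow> 'a list \<Rightarrow> 'q set \<Rightarrow> real" where
  "prob_set Delta s u T = (\<Sum>t\<in>T. prob Delta s u t)"

definition prefix_word :: "(nat \<Rightarrow> 'a) \<Rightarrow> nat \<Rightarrow> 'a list" where
  "prefix_word w k = map w [0..<k]"

definition simple_process :: "('q::finite \<Rightarrow> 'a \<Rightarrow> 'q \<Rightarrow> real) \<Rightarrow> (nat \<Rightarrow> 'a) \<Rightarrow> 'q \<Rightarrow> bool" where
  "simple_process Delta w p \<longleftrightarrow>
     (\<exists>lam > 0. \<exists>A B :: nat \<Rightarrow> 'q set.
        (\<forall>k. A k \<inter> B k = {} \<and> A k \<union> B k = UNIV) \<and>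
        (\<forall>k. \<forall>q\<in>A k. prob Delta p (prefix_word w k) q \<ge> lam) \<and>
        (\<lambda>n. prob_set Delta p (prefix_word w n) (B n)) \<longlonglongrightarrow> 0)"

definition simple_automaton :: "('q::finite \<Rightarrow> 'a \<Rightarrow> 'q \<Rightarrow> real) \<Rightarrow> bool" where
  "simple_automaton Delta \<longleftrightarrow> (\<forall>w p. simple_process Delta w p)"

type_synonym 'q lword = "'q \<Rightarrow> 'q \<Rightarrow> bool"

definition is_limit_word :: "'q lword \<Rightarrow> bool" where
  "is_limit_word u \<longleftrightarrow> (\<forall>s. \<exists>t. u s t)"

definition lw_concat :: "'q lword \<Rightarrow> 'q lword \<Rightarrow> 'q lword" where
  "lw_concat u v = (\<lambda>s t. \<exists>q. u s q \<and> v q t)"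

definition idempotent_lw :: "'q lword \<Rightarrow> bool" where
  "idempotent_lw u \<longleftrightarrow> lw_concat u u = u"

definition recurrent :: "'q lword \<Rightarrow> 'q \<Rightarrow> bool" where
  "recurrent u s \<longleftrightarrow> (\<forall>t. u s t \<longrightarrow> u t s)"

definition transient :: "'q lword \<Rightarrow> 'q \<Rightarrow> bool" where
  "transient u s \<longleftrightarrow> \<not> recurrent u s"

definition sharp :: "'q lword \<Rightarrow> 'q lword" where
  "sharp u = (\<lambda>s t. u s t \<and> recurrent u t)"

definition letter_lw :: "('q \<Rightarrow> 'a \<Rightarrow> 'q \<Rightarrow> real) \<Rightarrow> 'a \<Rightarrow> 'q lword" where
  "letter_lw Delta a = (\<lambda>s t. Delta s a t > 0)"

definition one_lw :: "'q lword" where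
  "one_lw = (\<lambda>s t. s = t)"

inductive_set markov_monoid :: "('q \<Rightarrow> 'a \<Rightarrow> 'q \<Rightarrow> real) \<Rightarrow> 'q lword set"
  for Delta where
  letter: "letter_lw Delta a \<in> markov_monoid Delta"
| one: "one_lw \<in> markov_monoid Delta"
| concat: "u \<in> markov_monoid Delta \<Longrightarrow> v \<in> markov_monoid Delta \<Longrightarrow> lw_concat u v \<in> markov_monoid Delta"
| iter: "u \<in> markov_monoid Delta \<Longrightarrow> idempotent_lw u \<Longrightarrow> sharp u \<in> markov_monoid Delta"

definition non_simplicity_witness ::
  "('q \<Rightarrow> 'a \<Rightarrow> 'q \<Rightarrow> real) \<Rightarrow> 'q lword \<Rightarrow> 'q lword \<Rightarrow> 'q lword \<Rightarrow> bool" where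
  "non_simplicity_witness Delta u v w \<longleftrightarrow>
     u \<in> markov_monoid Delta \<and> v \<in> markov_monoid Delta \<and> w \<in> markov_monoid Delta \<and>
     idempotent_lw v \<and>
     (\<exists>r t. idempotent_lw (lw_concat (lw_concat u (sharp v)) w) \<and>
            recurrent (lw_concat (lw_concat u (sharp v)) w) r \<and>
            lw_concat u v r t \<and> transient v t)"

end

theory Submission
  imports Defs
begin

context
  fixes D :: "'q::finite \<Rightarrow> 'a::finite \<Rightarrow> 'q \<Rightarrow> real"
  assumes st: "stochastic D"
begin

lemma D_nonneg: "D s a t \<ge> 0" using st unfolding stochastic_def by auto
lemma D_sum: "(\<Sum>t\<in>UNIV. D s a t) = 1" using st unfolding stochastic_def by auto

lemma prob_nonneg: "prob D s xs t \<ge> 0"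
  by (induction xs arbitrary: s) (auto intro!: sum_nonneg mult_nonneg_nonneg D_nonneg)

lemma prob_sum: "(\<Sum>t\<in>UNIV. prob D s xs t) = 1"
proof (induction xs arbitrary: s)
  case Nil then show ?case by simp
next
  case (Cons a xs)
  have "(\<Sum>t\<in>UNIV. prob D s (a#xs) t) = (\<Sum>t\<in>UNIV. \<Sum>q\<in>UNIV. D s a q * prob D q xs t)"
    by simp
  also have "\<dots> = (\<Sum>q\<in>UNIV. \<Sum>t\<in>UNIV. D s a q * prob D q xs t)"
    by (rule sum.swap)
  also have "\<dots> = (\<Sum>q\<in>UNIV. D s a q * (\<Sum>t\<in>UNIV. prob D q xs t))"
    by (simp add: sum_distrib_left)
  also have "\<dots> = 1" using Cons by (simp add: D_sum)
  finally show ?case .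
qed

lemma prob_le1: "prob D s xs t \<le> 1"
proof -
  have "prob D s xs t \<le> (\<Sum>t\<in>UNIV. prob D s xs t)"
    by (rule member_le_sum) (auto simp: prob_nonneg)
  then show ?thesis by (simp add: prob_sum)
qed

end

lemma prob_append: "prob D s (xs @ ys) t = (\<Sum>q\<in>UNIV. prob D s xs q * prob D q ys t)"
proof (induction xs arbitrary: s)
  case Nil
  have "(\<Sum>q\<in>UNIV. prob D s [] q * prob D q ys t) = (\<Sum>q\<in>UNIV. (if q = s then prob D s ys t else 0))"
    by (rule sum.cong) auto
  then show ?case by simp
next
  case (Cons a xs)
  have "prob D s ((a # xs) @ ys) t = (\<Sum>q'\<in>UNIV. D s a q' * (\<Sum>q\<in>UNIV. prob D q' xs q * prob D q ys t))"
    using Cons by simp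
  also have "\<dots> = (\<Sum>q'\<in>UNIV. \<Sum>q\<in>UNIV. D s a q' * prob D q' xs q * prob D q ys t)"
    by (simp add: sum_distrib_left mult.assoc)
  also have "\<dots> = (\<Sum>q\<in>UNIV. \<Sum>q'\<in>UNIV. D s a q' * prob D q' xs q * prob D q ys t)"
    by (rule sum.swap)
  also have "\<dots> = (\<Sum>q\<in>UNIV. prob D s (a # xs) q * prob D q ys t)"
    by (simp add: sum_distrib_right)
  finally show ?case .
qed


definition bnd :: "('q::finite \<Rightarrow> 'a \<Rightarrow> 'q \<Rightarrow> real) \<Rightarrow> 'q lword \<Rightarrow> 'a list \<Rightarrow> real \<Rightarrow> real \<Rightarrow> bool" where
  "bnd D x y d e \<longleftrightarrow> (\<forall>s t. x s t \<longrightarrow> d \<le> prob D s y t) \<and> (\<forall>s t. \<not> x s t \<longrightarrow> prob D s y t \<le> e)"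

definition RR :: "('q::finite \<Rightarrow> 'a \<Rightarrow> 'q \<Rightarrow> real) \<Rightarrow> 'q lword \<Rightarrow> real \<Rightarrow> bool" where
  "RR D x d \<longleftrightarrow> (\<forall>e>0. \<exists>y. bnd D x y d e)"

fun pw :: "'a list \<Rightarrow> nat \<Rightarrow> 'a list" where
  "pw y 0 = []"
| "pw y (Suc n) = pw y n @ y"

lemma pw_prefix: "i \<le> k \<Longrightarrow> \<exists>r. pw y k = pw y i @ r"
proof (induction k)
  case 0 then show ?case by simp
next
  case (Suc k)
  show ?case
  proof (cases "i = Suc k")
    case True then show ?thesis by simp
  next
    case False
    then have "i \<le> k" using Suc by simp
    then obtain r where "pw y k = pw y i @ r" using Suc by blast
    then show ?thesis by simp
  qed
qed

lemma length_pw: "length (pw y k) = k * length y"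
  by (induction k) auto

context
  fixes D :: "'q::finite \<Rightarrow> 'a::finite \<Rightarrow> 'q \<Rightarrow> real"
  assumes st: "stochastic D"
begin

lemma card_pos[simp]: "card (UNIV::'q set) > 0"
  by (simp add: card_gt_0_iff)

lemma prob_set_compl: "prob_set D s X S + prob_set D s X (- S) = 1"
proof -
  have "prob_set D s X S + prob_set D s X (- S) = (\<Sum>t\<in>UNIV. prob D s X t)"
    unfolding prob_set_def by (subst sum.union_disjoint[symmetric]) (auto intro: sum.cong)
  then show ?thesis using prob_sum[OF st] by simp
qed

lemma prob_set_nonneg: "prob_set D s X S \<ge> 0"
  unfolding prob_set_def by (rule sum_nonneg) (simp add: prob_nonneg[OF st])

lemma prob_set_le1: "prob_set D s X S \<le> 1"
  using prob_set_compl[of s X S] prob_set_nonneg[of s X "-S"] by linarith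

lemma prob_set_ge: "t \<in> S \<Longrightarrow> prob D s X t \<le> prob_set D s X S"
  unfolding prob_set_def by (rule member_le_sum) (auto simp: prob_nonneg[OF st])

lemma bnd_total:
  assumes "bnd D x y d e" "e * real (card (UNIV::'q set)) < 1"
  shows "\<exists>t. x s t"
proof (rule ccontr)
  assume "\<not> (\<exists>t. x s t)"
  then have "\<forall>t. prob D s y t \<le> e" using assms(1) unfolding bnd_def by auto
  then have "(\<Sum>t\<in>UNIV. prob D s y t) \<le> of_nat (card (UNIV::'q set)) * e"
    by (intro sum_bounded_above) auto
  then show False using prob_sum[OF st, of s y] assms(2) by (simp add: mult.commute)
qed

lemma RR_total:
  assumes "RR D x d" shows "\<exists>t. x s t"
proof -
  have "(1/(2 * real (card (UNIV::'q set)))) > 0" by simp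
  then obtain y where "bnd D x y d (1/(2 * real (card (UNIV::'q set))))" using assms unfolding RR_def by blast
  moreover have "(1/(2 * real (card (UNIV::'q set)))) * real (card (UNIV::'q set)) < 1" by simp
  ultimately show ?thesis by (rule bnd_total)
qed

lemma RR_le1:
  assumes "RR D x d" shows "d \<le> 1"
proof -
  obtain t where t: "x s t" using RR_total[OF assms] by blast
  obtain y where "bnd D x y d 1" using assms unfolding RR_def by fastforce
  then have "d \<le> prob D s y t" using t unfolding bnd_def by blast
  then show ?thesis using prob_le1[OF st, of s y t] by linarith
qed

lemma bnd_concat:
  assumes b1: "bnd D x1 y1 d1 e1" and b2: "bnd D x2 y2 d2 e2"
    and "d1 \<ge> 0" "d2 \<ge> 0" "e1 \<ge> 0" "e2 \<ge> 0"
  shows "bnd D (lw_concat x1 x2) (y1 @ y2) (d1 * d2) (real (card (UNIV::'q set)) * (e1 + e2))"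
  unfolding bnd_def
proof (intro conjI allI impI)
  fix s t assume "lw_concat x1 x2 s t"
  then obtain q where q: "x1 s q" "x2 q t" unfolding lw_concat_def by blast
  have "d1 * d2 \<le> prob D s y1 q * prob D q y2 t"
    using q b1 b2 assms(3,4) unfolding bnd_def by (intro mult_mono) (auto simp: prob_nonneg[OF st])
  also have "\<dots> \<le> (\<Sum>q\<in>UNIV. prob D s y1 q * prob D q y2 t)"
    by (rule member_le_sum) (auto simp: prob_nonneg[OF st])
  finally show "d1 * d2 \<le> prob D s (y1 @ y2) t" by (simp add: prob_append)
next
  fix s t assume nz: "\<not> lw_concat x1 x2 s t"
  have "\<And>q. prob D s y1 q * prob D q y2 t \<le> e1 + e2"
  proof -
    fix q
    show "prob D s y1 q * prob D q y2 t \<le> e1 + e2"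
    proof (cases "x1 s q")
      case True
      then have "\<not> x2 q t" using nz unfolding lw_concat_def by blast
      then have "prob D q y2 t \<le> e2" using b2 unfolding bnd_def by blast
      moreover have "prob D s y1 q * prob D q y2 t \<le> 1 * prob D q y2 t"
        by (intro mult_right_mono) (auto simp: prob_le1[OF st] prob_nonneg[OF st])
      ultimately show ?thesis using assms by linarith
    next
      case False
      then have "prob D s y1 q \<le> e1" using b1 unfolding bnd_def by blast
      moreover have "prob D s y1 q * prob D q y2 t \<le> prob D s y1 q * 1"
        by (intro mult_left_mono) (auto simp: prob_le1[OF st] prob_nonneg[OF st])
      ultimately show ?thesis using assms by linarith
    qed
  qed
  then have "(\<Sum>q\<in>UNIV. prob D s y1 q * prob D q y2 t) \<le> of_nat (card (UNIV::'q set)) * (e1 + e2)"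
    by (intro sum_bounded_above) auto
  then show "prob D s (y1 @ y2) t \<le> real (card (UNIV::'q set)) * (e1 + e2)" by (simp add: prob_append)
qed

lemma RR_concat:
  assumes "RR D x1 d1" "RR D x2 d2" "d1 > 0" "d2 > 0"
  shows "RR D (lw_concat x1 x2) (d1 * d2)"
  unfolding RR_def
proof (intro allI impI)
  fix e :: real assume e: "e > 0"
  define e' where "e' = e / (2 * real (card (UNIV::'q set)))"
  have e': "e' > 0" using e by (simp add: e'_def)
  obtain y1 where "bnd D x1 y1 d1 e'" using assms(1) e' unfolding RR_def by blast
  moreover obtain y2 where "bnd D x2 y2 d2 e'" using assms(2) e' unfolding RR_def by blast
  ultimately have "bnd D (lw_concat x1 x2) (y1 @ y2) (d1 * d2) (real (card (UNIV::'q set)) * (e' + e'))"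
    using assms e' by (intro bnd_concat) auto
  moreover have "real (card (UNIV::'q set)) * (e' + e') = e" by (simp add: e'_def)
  ultimately show "\<exists>y. bnd D (lw_concat x1 x2) y (d1 * d2) e" by auto
qed

lemma RR_one: "RR D one_lw 1"
  unfolding RR_def bnd_def one_lw_def by (auto intro!: exI[of _ "[]"])

lemma prob_single: "prob D s [a] t = D s a t"
proof -
  have "prob D s [a] t = (\<Sum>q\<in>UNIV. D s a q * (if q = t then 1 else 0))" by simp
  also have "\<dots> = (\<Sum>q\<in>UNIV. if q = t then D s a q else 0)"
    by (rule sum.cong) auto
  finally have "prob D s [a] t = (\<Sum>q\<in>UNIV. if q = t then D s a q else 0)" .
  then show ?thesis by simp
qed

lemma RR_letter: "\<exists>d>0. RR D (letter_lw D a) d"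
proof -
  define P where "P = {D s a t |s t. 0 < D s a t} \<union> {1}"
  have fin: "finite P" unfolding P_def
  proof -
    have "{D s a t |s t. 0 < D s a t} \<subseteq> (\<lambda>(s,t). D s a t) ` UNIV" by auto
    then show "finite ({D s a t |s t. 0 < D s a t} \<union> {1})" by (simp add: finite_subset)
  qed
  have pos: "\<forall>p\<in>P. p > 0" unfolding P_def by auto
  define d where "d = Min P"
  have "d \<in> P" unfolding d_def using fin by (intro Min_in) (auto simp: P_def)
  then have dpos: "d > 0" using pos by auto
  have "RR D (letter_lw D a) d" unfolding RR_def bnd_def letter_lw_def
  proof (intro allI impI exI[of _ "[a]"] conjI)
    fix e :: real and s t assume "0 < D s a t"
    then have "D s a t \<in> P" unfolding P_def by blast
    then show "d \<le> prob D s [a] t" unfolding d_def prob_single using fin by (rule Min_le[rotated])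
  next
    fix e :: real and s t assume "0 < e" "\<not> 0 < D s a t"
    then show "prob D s [a] t \<le> e" unfolding prob_single using D_nonneg[OF st, of s a t] by simp
  qed
  then show ?thesis using dpos by blast
qed

lemma leak:
  assumes cl: "\<And>q q'. q \<in> S \<Longrightarrow> x q q' \<Longrightarrow> q' \<in> S"
    and b: "bnd D x y d e" and e: "e \<ge> 0"
  shows "prob_set D s (X @ y) S \<ge> prob_set D s X S - real (card (UNIV::'q set)) * e"
proof -
  let ?P = "\<lambda>q. prob D s X q" and ?M = "\<lambda>q q'. prob D q y q'"
  have rowS: "(\<Sum>q'\<in>S. ?M q q') \<ge> 1 - real (card (UNIV::'q set)) * e" if "q \<in> S" for q
  proof -
    have "(\<Sum>q'\<in>-S. ?M q q') \<le> of_nat (card (-S)) * e"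
    proof (rule sum_bounded_above)
      fix q' assume "q' \<in> -S"
      then have "\<not> x q q'" using cl that by blast
      then show "?M q q' \<le> e" using b unfolding bnd_def by blast
    qed
    also have "\<dots> \<le> real (card (UNIV::'q set)) * e"
      using e by (intro mult_right_mono) (auto intro: card_mono)
    finally show ?thesis using prob_set_compl[of q y S] unfolding prob_set_def by linarith
  qed
  have "prob_set D s X S - real (card (UNIV::'q set)) * e \<le> prob_set D s X S * (1 - real (card (UNIV::'q set)) * e)"
  proof -
    have "prob_set D s X S * (real (card (UNIV::'q set)) * e) \<le> 1 * (real (card (UNIV::'q set)) * e)"
      using e by (intro mult_right_mono) (auto simp: prob_set_le1)
    then show ?thesis by (simp add: algebra_simps)
  qed
  also have "\<dots> = (\<Sum>q\<in>S. ?P q * (1 - real (card (UNIV::'q set)) * e))"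
    unfolding prob_set_def by (simp add: sum_distrib_right)
  also have "\<dots> \<le> (\<Sum>q\<in>S. ?P q * (\<Sum>q'\<in>S. ?M q q'))"
    by (rule sum_mono) (auto intro!: mult_left_mono rowS simp: prob_nonneg[OF st])
  also have "\<dots> = (\<Sum>q\<in>S. \<Sum>q'\<in>S. ?P q * ?M q q')"
    by (simp add: sum_distrib_left)
  also have "\<dots> \<le> (\<Sum>q\<in>UNIV. \<Sum>q'\<in>S. ?P q * ?M q q')"
    by (rule sum_mono2) (auto intro!: sum_nonneg mult_nonneg_nonneg simp: prob_nonneg[OF st])
  also have "\<dots> = (\<Sum>q'\<in>S. \<Sum>q\<in>UNIV. ?P q * ?M q q')" by (rule sum.swap)
  also have "\<dots> = prob_set D s (X @ y) S"
    unfolding prob_set_def by (simp add: prob_append)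
  finally show ?thesis .
qed

end


lemma idem_trans:
  assumes "idempotent_lw x" "x s q" "x q t" shows "x s t"
proof -
  have "lw_concat x x s t" using assms(2,3) unfolding lw_concat_def by blast
  then show ?thesis using assms(1) unfolding idempotent_lw_def by simp
qed

lemma rec_closed:
  assumes idem: "idempotent_lw x" and r: "recurrent x r" and rq: "x r q" shows "recurrent x q"
  unfolding recurrent_def
proof (intro allI impI)
  fix t assume qt: "x q t"
  have "x r t" using idem_trans[OF idem rq qt] .
  then have "x t r" using r unfolding recurrent_def by blast
  then show "x t q" using idem_trans[OF idem _ rq] by blast
qed

lemma rec_exists:
  fixes x :: "'q::finite lword"
  assumes idem: "idempotent_lw x" and tot: "\<And>s. \<exists>t. x s t"
  shows "\<exists>r. recurrent x r \<and> x s r"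
proof -
  let ?reach = "\<lambda>q. {t. x q t}"
  obtain q0 where "x s q0" using tot by blast
  then obtain q where q: "x s q" and qmin: "\<And>q'. x s q' \<Longrightarrow> card (?reach q) \<le> card (?reach q')"
    using ex_has_least_nat[of "\<lambda>q. x s q" q0 "\<lambda>q. card (?reach q)"] by blast
  have sub: "?reach q' \<subseteq> ?reach q" if "x q q'" for q'
    using idem_trans[OF idem that] by blast
  have eq: "?reach q' = ?reach q" if "x q q'" for q'
  proof -
    have "x s q'" using idem_trans[OF idem q that] .
    then have c1: "card (?reach q) \<le> card (?reach q')" by (rule qmin)
    have c2: "card (?reach q') \<le> card (?reach q)" using sub[OF that] by (intro card_mono) auto
    have ceq: "card (?reach q') = card (?reach q)" using c1 c2 by linarith
    show ?thesis by (rule card_subset_eq) (auto simp: ceq sub[OF that])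
  qed
  obtain t where t: "x q t" using tot by blast
  have "recurrent x t" unfolding recurrent_def
  proof (intro allI impI)
    fix t' assume "x t t'"
    then have "t' \<in> ?reach q" using eq[OF t] by blast
    then have "?reach t' = ?reach q" using eq by blast
    then show "x t' t" using t by blast
  qed
  moreover have "x s t" using idem_trans[OF idem q t] .
  ultimately show ?thesis by blast
qed

context
  fixes D :: "'q::finite \<Rightarrow> 'a::finite \<Rightarrow> 'q \<Rightarrow> real"
  assumes st: "stochastic D"
begin

lemma prob_set_split:
  fixes f :: "'q \<Rightarrow> real"
  shows "(\<Sum>q\<in>UNIV. f q) = (\<Sum>q\<in>T. f q) + (\<Sum>q\<in>-T. f q)"
  by (subst sum.union_disjoint[symmetric]) (auto intro: sum.cong)

lemma decay:
  assumes idem: "idempotent_lw x" and tot: "\<And>s. \<exists>t. x s t"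
    and b: "bnd D x y d e" and e: "e \<ge> 0"
  defines "T \<equiv> {q. \<not> recurrent x q}"
  shows "prob_set D s (X @ y) T \<le> (1 - d) * prob_set D s X T + real (card (UNIV::'q set)) * e"
proof -
  let ?P = "\<lambda>q. prob D s X q" and ?C = "real (card (UNIV::'q set))"
  have bT: "prob_set D q y T \<le> 1 - d" if "q \<in> T" for q
  proof -
    obtain r where r: "recurrent x r" "x q r" using rec_exists[OF idem tot] by blast
    then have "r \<notin> T" unfolding T_def by blast
    then have "T \<subseteq> - {r}" by blast
    then have "prob_set D q y T \<le> prob_set D q y (- {r})"
      unfolding prob_set_def by (intro sum_mono2) (auto simp: prob_nonneg[OF st])
    moreover have "prob_set D q y {r} \<ge> d" using r(2) b unfolding bnd_def prob_set_def by simp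
    ultimately show ?thesis using prob_set_compl[OF st, of q y "{r}"] by linarith
  qed
  have bR: "prob_set D q y T \<le> ?C * e" if "q \<notin> T" for q
  proof -
    have rq: "recurrent x q" using that unfolding T_def by blast
    have "prob_set D q y T \<le> of_nat (card T) * e"
      unfolding prob_set_def
    proof (rule sum_bounded_above)
      fix q' assume "q' \<in> T"
      then have "\<not> x q q'" using rec_closed[OF idem rq] unfolding T_def by blast
      then show "prob D q y q' \<le> e" using b unfolding bnd_def by blast
    qed
    also have "\<dots> \<le> ?C * e" using e by (intro mult_right_mono) (auto intro: card_mono)
    finally show ?thesis .
  qed
  have "prob_set D s (X @ y) T = (\<Sum>q'\<in>T. \<Sum>q\<in>UNIV. ?P q * prob D q y q')"
    unfolding prob_set_def by (simp add: prob_append)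
  also have "\<dots> = (\<Sum>q\<in>UNIV. \<Sum>q'\<in>T. ?P q * prob D q y q')" by (rule sum.swap)
  also have "\<dots> = (\<Sum>q\<in>UNIV. ?P q * prob_set D q y T)"
    unfolding prob_set_def by (simp add: sum_distrib_left)
  also have "\<dots> = (\<Sum>q\<in>T. ?P q * prob_set D q y T) + (\<Sum>q\<in>-T. ?P q * prob_set D q y T)"
    by (rule prob_set_split)
  also have "\<dots> \<le> (\<Sum>q\<in>T. ?P q * (1 - d)) + (\<Sum>q\<in>-T. ?P q * (?C * e))"
    by (intro add_mono sum_mono mult_left_mono) (auto simp: prob_nonneg[OF st] bT bR)
  also have "\<dots> = (1 - d) * prob_set D s X T + prob_set D s X (-T) * (?C * e)"
    unfolding prob_set_def by (simp add: sum_distrib_left sum_distrib_right mult_ac)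
  also have "\<dots> \<le> (1 - d) * prob_set D s X T + 1 * (?C * e)"
    using e by (intro add_left_mono mult_right_mono) (auto simp: prob_set_le1[OF st])
  finally show ?thesis by simp
qed

end


context
  fixes D :: "'q::finite \<Rightarrow> 'a::finite \<Rightarrow> 'q \<Rightarrow> real"
  assumes st: "stochastic D"
begin

lemma sharp_RR:
  assumes idem: "idempotent_lw x" and R: "RR D x d" and dpos: "d > 0"
  shows "\<exists>d'>0. \<forall>e>0. \<exists>y k. k \<ge> 1 \<and> (\<forall>s t. x s t \<longrightarrow> d \<le> prob D s y t) \<and> bnd D (sharp x) (pw y k) d' e"
proof (intro exI[of _ "d * d / 2"] conjI allI impI)
  show "d * d / 2 > 0" using dpos by simp
  have tot: "\<And>s. \<exists>t. x s t" using RR_total[OF st R] by blast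
  have d1: "d \<le> 1" using RR_le1[OF st R] .
  let ?C = "real (card (UNIV::'q set))"
  have Cpos: "?C > 0" using card_pos[OF st] by simp
  fix e :: real assume e: "e > 0"
  obtain n where n: "(1 - d) ^ n < e / 2" using real_arch_pow_inv[of "e/2" "1 - d"] e dpos by auto
  define k where "k = Suc (Suc n)"
  have kpos: "real k > 0" unfolding k_def by simp
  define e0 where "e0 = min (e * d / (2 * ?C)) (min (e / (2 * real k * ?C)) (d / (2 * real k * ?C)))"
  have e0pos: "e0 > 0" unfolding e0_def using e dpos Cpos kpos by simp
  have e0a: "?C * e0 / d \<le> e / 2"
  proof -
    have "e0 \<le> e * d / (2 * ?C)" unfolding e0_def by simp
    then have "?C * e0 \<le> ?C * (e * d / (2 * ?C))" using Cpos by (intro mult_left_mono) auto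
    then have "?C * e0 \<le> e * d / 2" using Cpos by simp
    then show ?thesis using dpos by (simp add: divide_le_eq mult.commute)
  qed
  have e0b: "real k * ?C * e0 \<le> e / 2"
  proof -
    have "e0 \<le> e / (2 * real k * ?C)" unfolding e0_def by simp
    then have "real k * ?C * e0 \<le> real k * ?C * (e / (2 * real k * ?C))"
      using Cpos kpos by (intro mult_left_mono) auto
    then show ?thesis using Cpos kpos by simp
  qed
  have e0c: "real k * ?C * e0 \<le> d / 2"
  proof -
    have "e0 \<le> d / (2 * real k * ?C)" unfolding e0_def by simp
    then have "real k * ?C * e0 \<le> real k * ?C * (d / (2 * real k * ?C))"
      using Cpos kpos by (intro mult_left_mono) auto
    then show ?thesis using Cpos kpos by simp
  qed
  obtain y where b: "bnd D x y d e0" using R e0pos unfolding RR_def by blast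
  have "bnd D (sharp x) (pw y k) (d * d / 2) e"
    unfolding bnd_def
  proof (intro conjI allI impI)
    fix s t assume "sharp x s t"
    then have st1: "x s t" and rt: "recurrent x t" unfolding sharp_def by auto
    define S where "S = {q. x t q}"
    have cl: "\<And>q q'. q \<in> S \<Longrightarrow> x q q' \<Longrightarrow> q' \<in> S" unfolding S_def using idem_trans[OF idem] by blast
    have tS: "t \<in> S"
    proof -
      obtain t1 where "x t t1" using tot by blast
      moreover then have "x t1 t" using rt unfolding recurrent_def by blast
      ultimately show ?thesis unfolding S_def using idem_trans[OF idem] by blast
    qed
    have mass: "prob_set D s (pw y (Suc j)) S \<ge> d - real j * ?C * e0" for j
    proof (induction j)
      case 0
      have "d \<le> prob D s y t" using st1 b unfolding bnd_def by blast
      also have "\<dots> \<le> prob_set D s y S" using prob_set_ge[OF st tS] .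
      finally show ?case by simp
    next
      case (Suc j)
      have "prob_set D s (pw y (Suc j) @ y) S \<ge> prob_set D s (pw y (Suc j)) S - ?C * e0"
        using leak[OF st, where S=S and x=x and y=y and d=d and e=e0 and s=s and X="pw y (Suc j)"] cl b e0pos by auto
      then show ?case using Suc by (simp add: algebra_simps)
    qed
    have "real n * ?C * e0 \<le> real k * ?C * e0"
      using Cpos e0pos unfolding k_def by (intro mult_right_mono) auto
    then have m2: "prob_set D s (pw y (Suc n)) S \<ge> d / 2" using mass[of n] e0c by linarith
    have "d * d / 2 \<le> d * prob_set D s (pw y (Suc n)) S"
      using m2 dpos by (simp add: mult_left_mono)
    also have "\<dots> = (\<Sum>q\<in>S. prob D s (pw y (Suc n)) q * d)"
      unfolding prob_set_def by (simp add: sum_distrib_left mult.commute)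
    also have "\<dots> \<le> (\<Sum>q\<in>S. prob D s (pw y (Suc n)) q * prob D q y t)"
    proof (rule sum_mono)
      fix q assume "q \<in> S"
      then have "x q t" using rt unfolding S_def recurrent_def by blast
      then have "d \<le> prob D q y t" using b unfolding bnd_def by blast
      then show "prob D s (pw y (Suc n)) q * d \<le> prob D s (pw y (Suc n)) q * prob D q y t"
        by (intro mult_left_mono) (auto simp: prob_nonneg[OF st])
    qed
    also have "\<dots> \<le> (\<Sum>q\<in>UNIV. prob D s (pw y (Suc n)) q * prob D q y t)"
      by (rule sum_mono2) (auto intro!: mult_nonneg_nonneg simp: prob_nonneg[OF st])
    also have "\<dots> = prob D s (pw y (Suc n) @ y) t" by (rule prob_append[symmetric])
    also have "\<dots> = prob D s (pw y k) t" unfolding k_def by (simp only: pw.simps(2)[of y "Suc n"])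
    finally show "d * d / 2 \<le> prob D s (pw y k) t" .
  next
    fix s t assume ns: "\<not> sharp x s t"
    show "prob D s (pw y k) t \<le> e"
    proof (cases "x s t")
      case False
      define S where "S = {q. x s q}"
      have cl: "\<And>q q'. q \<in> S \<Longrightarrow> x q q' \<Longrightarrow> q' \<in> S" unfolding S_def using idem_trans[OF idem] by blast
      have mass: "prob_set D s (pw y (Suc j)) S \<ge> 1 - real (Suc j) * ?C * e0" for j
      proof (induction j)
        case 0
        have "prob_set D s y (-S) \<le> of_nat (card (-S)) * e0"
          unfolding prob_set_def
        proof (rule sum_bounded_above)
          fix q assume "q \<in> -S" then have "\<not> x s q" unfolding S_def by blast
          then show "prob D s y q \<le> e0" using b unfolding bnd_def by blast
        qed
        also have "\<dots> \<le> ?C * e0" using e0pos by (intro mult_right_mono) (auto intro: card_mono)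
        finally show ?case using prob_set_compl[OF st, of s y S] by simp
      next
        case (Suc j)
        have "prob_set D s (pw y (Suc j) @ y) S \<ge> prob_set D s (pw y (Suc j)) S - ?C * e0"
          using leak[OF st, where S=S and x=x and y=y and d=d and e=e0 and s=s and X="pw y (Suc j)"] cl b e0pos by auto
        then show ?case using Suc by (simp add: algebra_simps)
      qed
      have tS: "t \<in> -S" using False unfolding S_def by blast
      have "prob D s (pw y k) t \<le> prob_set D s (pw y k) (-S)" using prob_set_ge[OF st tS] .
      also have "\<dots> = 1 - prob_set D s (pw y k) S" using prob_set_compl[OF st, of s "pw y k" S] by simp
      also have "\<dots> \<le> real k * ?C * e0" using mass[of "Suc n"] unfolding k_def by simp
      also have "\<dots> \<le> e" using e0b e by linarith
      finally show ?thesis .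
    next
      case True
      then have nr: "\<not> recurrent x t" using ns unfolding sharp_def by blast
      define T where "T = {q. \<not> recurrent x q}"
      have mass: "prob_set D s (pw y j) T \<le> (1 - d) ^ j + ?C * e0 / d" for j
      proof (induction j)
        case 0
        have "?C * e0 / d \<ge> 0" using Cpos e0pos dpos by simp
        then show ?case using prob_set_le1[OF st, of s "[]" T] by simp
      next
        case (Suc j)
        have "prob_set D s (pw y j @ y) T \<le> (1 - d) * prob_set D s (pw y j) T + ?C * e0"
          using decay[OF st idem tot b] e0pos unfolding T_def by simp
        also have "\<dots> \<le> (1 - d) * ((1 - d) ^ j + ?C * e0 / d) + ?C * e0"
          using Suc d1 by (intro add_right_mono mult_left_mono) auto
        also have "\<dots> = (1 - d) ^ Suc j + ?C * e0 / d"
        proof -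
          have "(1 - d) * (?C * e0 / d) + ?C * e0 = ?C * e0 / d"
            using dpos by (simp add: field_simps)
          then show ?thesis by (simp add: algebra_simps)
        qed
        finally show ?case by simp
      qed
      have tT: "t \<in> T" using nr unfolding T_def by blast
      have "(1 - d) ^ k \<le> (1 - d) ^ n"
        using d1 dpos unfolding k_def by (intro power_decreasing) auto
      then have "prob D s (pw y k) t \<le> (1 - d) ^ n + ?C * e0 / d"
        using prob_set_ge[OF st tT, of s "pw y k"] mass[of k] by linarith
      then show ?thesis using n e0a by linarith
    qed
  qed
  moreover have "k \<ge> 1" unfolding k_def by simp
  moreover have "\<forall>s t. x s t \<longrightarrow> d \<le> prob D s y t" using b unfolding bnd_def by blast
  ultimately show "\<exists>y k. k \<ge> 1 \<and> (\<forall>s t. x s t \<longrightarrow> d \<le> prob D s y t) \<and> bnd D (sharp x) (pw y k) (d * d / 2) e"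
    by blast
qed

lemma sharp_RR2:
  assumes "idempotent_lw x" "RR D x d" "d > 0"
  shows "\<exists>d'>0. RR D (sharp x) d'"
  using sharp_RR[OF assms] unfolding RR_def by blast

lemma MM_RR: "x \<in> markov_monoid D \<Longrightarrow> \<exists>d>0. RR D x d"
proof (induction rule: markov_monoid.induct)
  case (letter a) then show ?case using RR_letter[OF st] by blast
next
  case one then show ?case using RR_one[OF st] by (intro exI[of _ 1]) auto
next
  case (concat u v)
  then obtain d1 d2 where "d1 > 0" "RR D u d1" "d2 > 0" "RR D v d2" by blast
  then show ?case using RR_concat[OF st] by (intro exI[of _ "d1 * d2"]) auto
next
  case (iter u)
  then show ?case using sharp_RR2 by blast
qed

end


lemma descent:
  fixes f :: "nat \<Rightarrow> real"
  assumes "c0 \<le> f 1" "\<And>i. dl * f i \<le> f (Suc i)" "f k < lam" "k \<ge> 1" "dl \<ge> 0"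
  shows "\<exists>i. 1 \<le> i \<and> i \<le> k \<and> f i < lam \<and> min c0 (dl * lam) \<le> f i"
  using assms(4,3)
proof (induction k rule: nat_induct_at_least)
  case base then show ?case using assms(1) by (intro exI[of _ 1]) auto
next
  case (Suc k)
  show ?case
  proof (cases "f k < lam")
    case True then show ?thesis using Suc.IH by (metis le_SucI)
  next
    case False
    have "dl * lam \<le> dl * f k" using False assms(5) by (intro mult_left_mono) auto
    then have "dl * lam \<le> f (Suc k)" using assms(2)[of k] by linarith
    then show ?thesis using Suc by (intro exI[of _ "Suc k"]) auto
  qed
qed

lemma self_loop_exists:
  fixes v :: "'q::finite lword"
  assumes idem: "idempotent_lw v" and vq: "v q t0"
  shows "\<exists>a. v q a \<and> v a a \<and> v a t0"
proof -
  let ?B = "{b. v q b \<and> v b t0}"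
  have succ: "\<exists>c. v b c \<and> c \<in> ?B" if "b \<in> ?B" for b
  proof -
    have "v b t0" using that by blast
    then have "lw_concat v v b t0" using idem unfolding idempotent_lw_def by simp
    then obtain c where "v b c" "v c t0" unfolding lw_concat_def by blast
    moreover have "v q c" using idem_trans[OF idem _ \<open>v b c\<close>] that by blast
    ultimately show ?thesis by blast
  qed
  let ?r = "\<lambda>b. {c \<in> ?B. v b c}"
  have "lw_concat v v q t0" using idem vq unfolding idempotent_lw_def by simp
  then obtain b0 where "b0 \<in> ?B" unfolding lw_concat_def by blast
  then obtain a where a: "a \<in> ?B" and amin: "\<And>b. b \<in> ?B \<Longrightarrow> card (?r a) \<le> card (?r b)"
    using ex_has_least_nat[of "\<lambda>b. b \<in> ?B" b0 "\<lambda>b. card (?r b)"] by blast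
  have eq: "?r c = ?r a" if "c \<in> ?r a" for c
  proof -
    have sb: "?r c \<subseteq> ?r a" using idem_trans[OF idem] that by blast
    have c1: "card (?r a) \<le> card (?r c)" using amin that by blast
    have c2: "card (?r c) \<le> card (?r a)" using sb by (intro card_mono) auto
    have ceq: "card (?r c) = card (?r a)" using c1 c2 by linarith
    show ?thesis by (rule card_subset_eq[OF _ sb ceq]) simp
  qed
  obtain c where c: "c \<in> ?r a" using succ[OF a] by blast
  then have "c \<in> ?r c" using eq[OF c] by blast
  then show ?thesis by blast
qed


lemma prob_ge_step:
  assumes st: "stochastic D"
  shows "prob D s X q * prob D q Y t \<le> prob D s (X @ Y) t"
  unfolding prob_append by (rule member_le_sum) (auto intro!: mult_nonneg_nonneg simp: prob_nonneg[OF st])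

lemma prob_le_step:
  assumes st: "stochastic D" and b: "\<And>q. prob D q Y t \<le> E" and E: "E \<ge> 0"
  shows "prob D s (X @ Y) t \<le> E"
proof -
  have "prob D s (X @ Y) t \<le> (\<Sum>q\<in>UNIV. prob D s X q * E)"
    unfolding prob_append by (intro sum_mono mult_left_mono b) (auto simp: prob_nonneg[OF st])
  also have "\<dots> = E" using prob_sum[OF st, of s X] by (simp add: sum_distrib_right[symmetric])
  finally show ?thesis .
qed

lemma aux_eta: "(c::real) > 0 \<Longrightarrow> c * (c * (a / (c * c * (2 * c + 1)) + a / (c * c * (2 * c + 1))) + a / (c * c * (2 * c + 1))) = a / c"
proof -
  assume c: "c > 0"
  define w where "w = c * c * (2 * c + 1)"
  have "c * (c * (a / w + a / w) + a / w) = (c * (2 * c + 1)) * a / w"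
    by (simp add: algebra_simps add_divide_distrib)
  also have "\<dots> = ((c * (2 * c + 1)) * a) / ((c * (2 * c + 1)) * c)" unfolding w_def by (simp add: algebra_simps)
  also have "\<dots> = a / c" using c by (intro nonzero_mult_divide_mult_cancel_left) (simp add: add_pos_pos)
  finally show ?thesis unfolding w_def .
qed

lemma aux_epK: "(c::real) \<ge> 1 \<Longrightarrow> a \<ge> 0 \<Longrightarrow> c * (a / (c * c * (2 * c + 1)) + a / (c * c * (2 * c + 1))) \<le> 2 * a"
proof -
  assume c: "c \<ge> 1" and a: "a \<ge> 0"
  have e: "c * (a / (c * c * (2 * c + 1)) + a / (c * c * (2 * c + 1))) = (2 * a) / (c * (2 * c + 1))"
  proof -
    have "c * (a / (c * c * (2 * c + 1)) + a / (c * c * (2 * c + 1))) = (c * (2 * a)) / (c * (c * (2 * c + 1)))"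
      by (simp add: algebra_simps add_divide_distrib)
    also have "\<dots> = (2 * a) / (c * (2 * c + 1))" using c by (intro nonzero_mult_divide_mult_cancel_left) simp
    finally show ?thesis .
  qed
  have g: "1 * 1 \<le> c * (2 * c + 1)" using c by (intro mult_mono) auto
  have "2 * a * 1 \<le> 2 * a * (c * (2 * c + 1))" using g a by (intro mult_left_mono) auto
  then show ?thesis unfolding e using g by (simp add: divide_le_eq)
qed

theorem proposition5p11:
  fixes Delta :: "'q::finite \<Rightarrow> 'a::finite \<Rightarrow> 'q \<Rightarrow> real"
  assumes "stochastic Delta"
    and "\<exists>u v w. non_simplicity_witness Delta u v w"
  shows "\<not> simple_automaton Delta"
proof
  note st = assms(1)
  assume simpl: "simple_automaton Delta"
  obtain u v w r t0 where uM: "u \<in> markov_monoid Delta" and vM: "v \<in> markov_monoid Delta"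
    and wM: "w \<in> markov_monoid Delta" and idv: "idempotent_lw v"
    and idz0: "idempotent_lw (lw_concat (lw_concat u (sharp v)) w)"
    and rr: "recurrent (lw_concat (lw_concat u (sharp v)) w) r"
    and uvr: "lw_concat u v r t0" and tr0: "transient v t0"
    using assms(2) unfolding non_simplicity_witness_def by blast
  define z where "z = lw_concat (lw_concat u (sharp v)) w"
  have rrz: "recurrent z r" using rr unfolding z_def .
  obtain q0 where q0: "u r q0" "v q0 t0" using uvr unfolding lw_concat_def by blast
  obtain t where t: "v q0 t" "v t t" "v t t0" using self_loop_exists[OF idv q0(2)] by blast
  have tnr: "\<not> recurrent v t"
  proof
    assume "recurrent v t" then have "recurrent v t0" using rec_closed[OF idv _ t(3)] by blast
    then show False using tr0 unfolding transient_def by blast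
  qed
  obtain du where du: "du > 0" "RR Delta u du" using MM_RR[OF st uM] by blast
  obtain dv where dv: "dv > 0" "RR Delta v dv" using MM_RR[OF st vM] by blast
  obtain dw where dw: "dw > 0" "RR Delta w dw" using MM_RR[OF st wM] by blast
  obtain d' where d': "d' > 0" and shp: "\<forall>e>0. \<exists>y k. k \<ge> 1 \<and> (\<forall>s t. v s t \<longrightarrow> dv \<le> prob Delta s y t) \<and> bnd Delta (sharp v) (pw y k) d' e"
    using sharp_RR[OF st idv dv(2) dv(1)] by blast
  have zM: "z \<in> markov_monoid Delta" unfolding z_def
    by (intro markov_monoid.concat markov_monoid.iter uM vM wM idv)
  have idz: "idempotent_lw z" using idz0 unfolding z_def .
  obtain dzz where "dzz > 0" "RR Delta z dzz" using MM_RR[OF st zM] by blast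
  then have ztot: "\<exists>t'. z s t'" for s using RR_total[OF st] by blast
  have zrr: "z r r"
  proof -
    obtain t' where "z r t'" using ztot by blast
    moreover then have "z t' r" using rrz unfolding recurrent_def by blast
    ultimately show ?thesis using idem_trans[OF idz] by blast
  qed
  let ?C = "real (card (UNIV::'q set))"
  have C1: "?C \<ge> 1" using card_pos[OF st] by (simp add: Suc_le_eq[symmetric])
  define ep where "ep n = (1/2)^(n+2) / (?C * ?C * (2*?C+1))" for n :: nat
  have ep_pos: "ep n > 0" for n unfolding ep_def using C1 by simp
  have ex: "\<forall>n. \<exists>p. bnd Delta u (fst p) du (ep n) \<and> fst (snd p) \<ge> 1
     \<and> (\<forall>a b. v a b \<longrightarrow> dv \<le> prob Delta a (fst (snd (snd p))) b)
     \<and> bnd Delta (sharp v) (pw (fst (snd (snd p))) (fst (snd p))) d' (ep n)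
     \<and> bnd Delta w (snd (snd (snd p))) dw (ep n)"
  proof
    fix n
    obtain U where "bnd Delta u U du (ep n)" using du(2) ep_pos unfolding RR_def by blast
    moreover obtain V k where "k \<ge> 1" "\<forall>s t. v s t \<longrightarrow> dv \<le> prob Delta s V t" "bnd Delta (sharp v) (pw V k) d' (ep n)"
      using shp ep_pos by blast
    moreover obtain W where "bnd Delta w W dw (ep n)" using dw(2) ep_pos unfolding RR_def by blast
    ultimately show "\<exists>p. bnd Delta u (fst p) du (ep n) \<and> fst (snd p) \<ge> 1
     \<and> (\<forall>a b. v a b \<longrightarrow> dv \<le> prob Delta a (fst (snd (snd p))) b)
     \<and> bnd Delta (sharp v) (pw (fst (snd (snd p))) (fst (snd p))) d' (ep n)
     \<and> bnd Delta w (snd (snd (snd p))) dw (ep n)"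
      by (intro exI[of _ "(U, k, V, W)"]) auto
  qed
  then obtain f where f: "\<forall>n. bnd Delta u (fst (f n)) du (ep n) \<and> fst (snd (f n)) \<ge> 1
     \<and> (\<forall>a b. v a b \<longrightarrow> dv \<le> prob Delta a (fst (snd (snd (f n)))) b)
     \<and> bnd Delta (sharp v) (pw (fst (snd (snd (f n)))) (fst (snd (f n)))) d' (ep n)
     \<and> bnd Delta w (snd (snd (snd (f n)))) dw (ep n)"
    using choice[OF ex] by blast
  define U where "U n = fst (f n)" for n
  define K where "K n = fst (snd (f n))" for n
  define V where "V n = fst (snd (snd (f n)))" for n
  define W where "W n = snd (snd (snd (f n)))" for n
  have bU: "bnd Delta u (U n) du (ep n)" for n using f unfolding U_def by blast
  have K1: "K n \<ge> 1" for n using f unfolding K_def by blast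
  have lowV: "\<And>a b. v a b \<Longrightarrow> dv \<le> prob Delta a (V n) b" for n using f unfolding V_def by blast
  have bVK: "bnd Delta (sharp v) (pw (V n) (K n)) d' (ep n)" for n using f unfolding V_def K_def by blast
  have bW: "bnd Delta w (W n) dw (ep n)" for n using f unfolding W_def by blast
  have bUV: "bnd Delta (lw_concat u (sharp v)) (U n @ pw (V n) (K n)) (du * d') (?C * (ep n + ep n))" for n
    using bnd_concat[OF st bU[of n] bVK[of n]] du d' ep_pos[of n] by (simp add: less_imp_le)
  have bB: "bnd Delta z ((U n @ pw (V n) (K n)) @ W n) (du * d' * dw) (?C * (?C * (ep n + ep n) + ep n))" for n
    unfolding z_def using bnd_concat[OF st bUV[of n] bW[of n]] du d' dw ep_pos[of n] C1
    by (simp add: less_imp_le)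
  have Cpos: "?C > 0" using C1 by linarith
  have eta: "?C * (?C * (ep n + ep n) + ep n) = (1/2)^(n+2) / ?C" for n
    unfolding ep_def using aux_eta[OF Cpos] .
  have epK: "?C * (ep n + ep n) \<le> (1/2)^n" for n
  proof -
    have "?C * (ep n + ep n) \<le> 2 * (1/2)^(n+2)"
      unfolding ep_def using aux_epK[OF C1, of "(1/2)^(n+2)"] by simp
    also have "\<dots> \<le> (1/2)^n" by simp
    finally show ?thesis .
  qed
  define Bk where "Bk n = (U n @ pw (V n) (K n)) @ W n" for n
  define L where "L n = concat (map Bk [0..<n])" for n
  have LSuc: "L (Suc n) = L n @ Bk n" for n unfolding L_def by simp
  have Vne: "V n \<noteq> []" for n
  proof
    assume V0: "V n = []"
    obtain t' where t': "v t t'" "\<not> v t' t" using tnr unfolding recurrent_def by blast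
    then have "t \<noteq> t'" by blast
    moreover have "dv \<le> prob Delta t (V n) t'" using lowV t'(1) .
    ultimately show False using V0 dv(1) by simp
  qed
  have lenB: "length (Bk n) \<ge> 1" for n
  proof -
    have "length (V n) \<ge> 1" using Vne[of n] by (cases "V n") auto
    then have "K n * length (V n) \<ge> 1" using K1[of n] by (simp add: Suc_le_eq)
    moreover have "length (Bk n) = length (U n) + K n * length (V n) + length (W n)"
      unfolding Bk_def by (simp add: length_pw)
    ultimately show ?thesis by linarith
  qed
  have lenL: "length (L n) \<ge> n" for n
  proof (induction n)
    case (Suc n)
    then show ?case using lenB[of n] by (simp add: LSuc)
  qed (simp add: L_def)
  have Lpre: "a \<le> b \<Longrightarrow> \<exists>rs. L b = L a @ rs" for a b
  proof (induction b rule: dec_induct)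
    case base then show ?case by simp
  next
    case (step b) then show ?case using LSuc by auto
  qed
  have Lnth: "L b ! i = L a ! i" if ab: "a \<le> b" and il: "i < length (L a)" for a b i
  proof -
    obtain rs where "L b = L a @ rs" using Lpre[OF ab] by blast
    then show ?thesis using il by (simp add: nth_append)
  qed
  define wd where "wd i = L (Suc i) ! i" for i
  have pref: "prefix_word wd m = take m (L j)" if "m \<le> length (L j)" for m j
    unfolding prefix_word_def
  proof (rule nth_equalityI)
    show "length (map wd [0..<m]) = length (take m (L j))" using that by simp
  next
    fix i assume "i < length (map wd [0..<m])"
    then have im: "i < m" by simp
    have i1: "i < length (L (Suc i))" using lenL[of "Suc i"] by simp
    have i2: "i < length (L j)" using im that by simp
    have "L (Suc i) ! i = L (max (Suc i) j) ! i" using Lnth[OF _ i1, of "max (Suc i) j"] by simp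
    also have "\<dots> = L j ! i" using Lnth[OF _ i2, of "max (Suc i) j"] by simp
    finally show "map wd [0..<m] ! i = take m (L j) ! i" using im unfolding wd_def by simp
  qed
  obtain lam and A B :: "nat \<Rightarrow> 'q set" where lam: "lam > 0" and AB: "\<forall>k. A k \<inter> B k = {} \<and> A k \<union> B k = UNIV"
    and Alam: "\<forall>k. \<forall>q\<in>A k. prob Delta r (prefix_word wd k) q \<ge> lam"
    and lim: "(\<lambda>n. prob_set Delta r (prefix_word wd n) (B n)) \<longlonglongrightarrow> 0"
  proof -
    have "simple_process Delta wd r" using simpl unfolding simple_automaton_def by blast
    then show ?thesis unfolding simple_process_def by (elim exE conjE) (rule that; assumption)
  qed
  define Cr where "Cr = {q. z r q}"
  have clr: "\<And>q q'. q \<in> Cr \<Longrightarrow> z q q' \<Longrightarrow> q' \<in> Cr" unfolding Cr_def using idem_trans[OF idz] by blast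
  have mass: "prob_set Delta r (L n) Cr \<ge> 1/2 + (1/2)^(n+1)" for n
  proof (induction n)
    case 0
    have "r \<in> Cr" unfolding Cr_def using zrr by simp
    then have "prob Delta r [] r \<le> prob_set Delta r [] Cr" by (rule prob_set_ge[OF st])
    then show ?case by (simp add: L_def)
  next
    case (Suc n)
    have "prob_set Delta r (L n @ Bk n) Cr \<ge> prob_set Delta r (L n) Cr - ?C * (?C * (?C * (ep n + ep n) + ep n))"
      unfolding Bk_def
    proof (rule leak[OF st clr bB])
      show "0 \<le> ?C * (?C * (ep n + ep n) + ep n)"
        using ep_pos[of n] Cpos by (intro mult_nonneg_nonneg add_nonneg_nonneg) auto
    qed
    moreover have "?C * (?C * (?C * (ep n + ep n) + ep n)) = (1/2)^(n+2)" using eta[of n] C1 by simp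
    ultimately show ?case using Suc by (simp add: LSuc)
  qed
  define dz where "dz = du * d' * dw"
  have dzpos: "dz > 0" unfolding dz_def using du dv d' dw by simp
  have startr: "prob Delta r (L (Suc n)) r \<ge> dz / 2" for n
  proof -
    have "dz / 2 \<le> dz * prob_set Delta r (L n) Cr"
    proof -
      have "(0::real) \<le> (1/2)^(n+1)" by simp
      then have "1/2 \<le> prob_set Delta r (L n) Cr" using mass[of n] by linarith
      then have "dz * (1/2) \<le> dz * prob_set Delta r (L n) Cr" using dzpos by (intro mult_left_mono) auto
      then show ?thesis by simp
    qed
    also have "\<dots> = (\<Sum>q\<in>Cr. prob Delta r (L n) q * dz)"
      unfolding prob_set_def by (simp add: sum_distrib_left mult.commute)
    also have "\<dots> \<le> (\<Sum>q\<in>Cr. prob Delta r (L n) q * prob Delta q (Bk n) r)"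
    proof (rule sum_mono)
      fix q assume "q \<in> Cr"
      then have "z q r" using rrz unfolding Cr_def recurrent_def by blast
      then have "dz \<le> prob Delta q (Bk n) r" using bB unfolding bnd_def Bk_def dz_def by blast
      then show "prob Delta r (L n) q * dz \<le> prob Delta r (L n) q * prob Delta q (Bk n) r"
        by (intro mult_left_mono) (auto simp: prob_nonneg[OF st])
    qed
    also have "\<dots> \<le> (\<Sum>q\<in>UNIV. prob Delta r (L n) q * prob Delta q (Bk n) r)"
      by (rule sum_mono2) (auto intro!: mult_nonneg_nonneg simp: prob_nonneg[OF st])
    also have "\<dots> = prob Delta r (L (Suc n)) r" by (simp add: LSuc prob_append)
    finally show ?thesis .
  qed
  define Q where "Q n i = prob Delta r (L n @ U n @ pw (V n) i) t" for n i
  define c0 where "c0 = dz / 2 * (du * dv)"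
  have Q1: "c0 \<le> Q (Suc n) 1" for n
  proof -
    have "du * dv \<le> prob Delta r (U (Suc n)) q0 * prob Delta q0 (V (Suc n)) t"
      using bU q0(1) lowV t(1) du dv unfolding bnd_def
      by (intro mult_mono) (auto simp: prob_nonneg[OF st])
    also have "\<dots> \<le> prob Delta r (U (Suc n) @ V (Suc n)) t" by (rule prob_ge_step[OF st])
    finally have a: "du * dv \<le> prob Delta r (U (Suc n) @ V (Suc n)) t" .
    have "c0 \<le> prob Delta r (L (Suc n)) r * prob Delta r (U (Suc n) @ V (Suc n)) t"
      unfolding c0_def using startr[of n] a du dv dzpos
      by (intro mult_mono) (auto simp: prob_nonneg[OF st])
    also have "\<dots> \<le> Q (Suc n) 1" unfolding Q_def
      using prob_ge_step[OF st, of r "L (Suc n)" r "U (Suc n) @ V (Suc n)" t] by simp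
    finally show ?thesis .
  qed
  have Qstep: "dv * Q n i \<le> Q n (Suc i)" for n i
  proof -
    have "Q n i * prob Delta t (V n) t \<le> Q n (Suc i)"
      unfolding Q_def using prob_ge_step[OF st, of r "L n @ U n @ pw (V n) i" t "V n" t] by simp
    moreover have "Q n i * dv \<le> Q n i * prob Delta t (V n) t"
      using lowV[OF t(2)] by (intro mult_left_mono) (auto simp: Q_def prob_nonneg[OF st])
    ultimately show ?thesis by (simp add: mult.commute)
  qed
  have QK: "Q n (K n) \<le> (1/2)^n" for n
  proof -
    have "Q n (K n) \<le> ?C * (ep n + ep n)" unfolding Q_def
    proof (rule prob_le_step[OF st])
      fix q
      have "\<not> lw_concat u (sharp v) q t" using tnr unfolding lw_concat_def sharp_def by blast
      then show "prob Delta q (U n @ pw (V n) (K n)) t \<le> ?C * (ep n + ep n)"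
        using bUV unfolding bnd_def by blast
    next
      show "0 \<le> ?C * (ep n + ep n)" using ep_pos C1 by (simp add: less_imp_le)
    qed
    then show ?thesis using epK[of n] by linarith
  qed
  define c where "c = min c0 (dv * lam)"
  have cpos: "c > 0" unfolding c_def c0_def using dzpos du dv lam by simp
  obtain N where N: "\<forall>m\<ge>N. norm (prob_set Delta r (prefix_word wd m) (B m) - 0) < c"
    using LIMSEQ_D[OF lim cpos] by blast
  obtain n0 where n0: "(1/2::real)^n0 < lam" using real_arch_pow_inv[of lam "1/2"] lam by auto
  define n where "n = Suc (max N n0)"
  have "(1/2::real)^n \<le> (1/2)^n0" unfolding n_def by (intro power_decreasing) auto
  then have QKl: "Q n (K n) < lam" using QK[of n] n0 by linarith
  have Q1n: "c0 \<le> Q n 1" unfolding n_def by (rule Q1)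
  obtain i where i: "1 \<le> i" "i \<le> K n" "Q n i < lam" "min c0 (dv * lam) \<le> Q n i"
    using descent[of c0 "Q n" dv "K n" lam, OF Q1n Qstep QKl K1] dv by auto
  define m where "m = length (L n @ U n @ pw (V n) i)"
  obtain rs where rs: "pw (V n) (K n) = pw (V n) i @ rs" using pw_prefix[OF i(2)] by blast
  have LSn: "L (Suc n) = (L n @ U n @ pw (V n) i) @ (rs @ W n)"
    using LSuc[of n] rs unfolding Bk_def by simp
  have pw_eq: "prefix_word wd m = L n @ U n @ pw (V n) i"
    using pref[of m "Suc n"] LSn unfolding m_def by simp
  have mN: "m \<ge> N"
  proof -
    have "m \<ge> length (L n)" unfolding m_def by simp
    moreover have "length (L n) \<ge> n" by (rule lenL)
    ultimately show ?thesis unfolding n_def by linarith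
  qed
  have pt: "prob Delta r (prefix_word wd m) t = Q n i" unfolding Q_def pw_eq ..
  have "t \<notin> A m" using Alam pt i(3) by force
  then have "t \<in> B m" using AB by blast
  then have "Q n i \<le> prob_set Delta r (prefix_word wd m) (B m)"
    using prob_set_ge[OF st] pt by metis
  moreover have "prob_set Delta r (prefix_word wd m) (B m) < c"
  proof -
    have "\<bar>prob_set Delta r (prefix_word wd m) (B m)\<bar> < c" using N mN by simp
    then show ?thesis by linarith
  qed
  ultimately show False using i(4) unfolding c_def by linarith
qed

end
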